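(* Let $\mathcal{A}\subset\mathcal{B}\subset\mathcal{N}$ with $\mathcal{A}$ a $\gamma$-ensemble ($|\mathcal{A}|/N\ge\gamma$), and let $\Theta$ be a solution of the Kuramoto model with $D(\Theta_\mathcal{A}(t_0))<2\pi$. Then $$\left.\frac{d}{dt}\right|^+_{t=t_0}D(\Theta_\mathcal{A})\le D(\Omega_\mathcal{B})-2\kappa\sin\frac{D(\Theta_\mathcal{A}(t_0))}{2}\left(\gamma\cos\frac{D(\Theta_\mathcal{A}(t_0))}{2}-(1-\gamma)\right),$$ where $\frac{d}{dt}\big|^+$ is the upper Dini derivative.
   Context: Kuramoto model: for $N\ge2$, $\Omega=(\nu_1,\dots,\nu_N)\in\mathbb{R}^N$, $\kappa\ge0$, $\Theta(t)\in\mathbb{R}^N$ solves $\dot\theta_i=\nu_i+\frac{\kappa}{N}\sum_j\sin(\theta_j-\theta_i)$. $\mathcal{N}=\{1,\dots,N\}$; for $\mathcal{A}\subset\mathcal{N}$, $D(\Theta_\mathcal{A})=\max_{i,j\in\mathcal{A}}|\theta_i-\theta_j|$, $D(\Omega_\mathcal{A})=\max_{i,j\in\mathcal{A}}|\nu_i-\nu_j|$; $\gamma\in(1/2,1]$. *)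

theory Defs
  imports "HOL-Analysis.Analysis" "HOL-Library.Extended_Real"
begin

definition diam :: "nat set \<Rightarrow> (nat \<Rightarrow> real) \<Rightarrow> real" where
  "diam A x = Max {\<bar>x i - x j\<bar> | i j. i \<in> A \<and> j \<in> A}"

definition kuramoto_rhs :: "nat \<Rightarrow> (nat \<Rightarrow> real) \<Rightarrow> real \<Rightarrow> (nat \<Rightarrow> real) \<Rightarrow> nat \<Rightarrow> real" where
  "kuramoto_rhs N \<nu> \<kappa> \<theta> i = \<nu> i + \<kappa> / real N * (\<Sum>j\<in>{1..N}. sin (\<theta> j - \<theta> i))"

definition upper_dini :: "(real \<Rightarrow> real) \<Rightarrow> real \<Rightarrow> ereal" where
  "upper_dini f t = Limsup (at_right 0) (\<lambda>h. ereal ((f (t + h) - f t) / h))"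

end

theory Submission imports Defs begin
lemma at_Ico: fixes t0 T :: real assumes "T > 0" shows "at t0 within {t0..<t0+T} = at_right t0"
proof -
  have "at t0 within {t0..<t0+T} = at t0 within {t0<..}"
    by (rule at_within_nhd[of _ "{t0-T<..<t0+T}"]) (use assms in auto)
  thus ?thesis .
qed

lemma dini_max:
  fixes f :: "'p \<Rightarrow> real \<Rightarrow> real" and P :: "'p set" and t0 c :: real
  assumes fin: "finite P" and ne: "P \<noteq> {}"
  and deriv: "\<And>p. p\<in>P \<Longrightarrow> ((\<lambda>y. (f p y - f p t0)/(y - t0)) \<longlongrightarrow> d p) (at_right t0)"
  and cont: "\<And>p. p\<in>P \<Longrightarrow> (f p \<longlongrightarrow> f p t0) (at_right t0)"
  and bnd: "\<And>p. p\<in>P \<Longrightarrow> f p t0 = Max ((\<lambda>q. f q t0) ` P) \<Longrightarrow> d p \<le> c"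
  shows "Limsup (at_right 0) (\<lambda>h. ereal ((Max ((\<lambda>q. f q (t0+h)) ` P) - Max ((\<lambda>q. f q t0) ` P))/h)) \<le> ereal c"
proof (rule ereal_le_epsilon2)
  fix e :: real assume e: "0 < e"
  define G0 where "G0 = Max ((\<lambda>q. f q t0) ` P)"
  have each: "eventually (\<lambda>y. f p y \<le> G0 + (y - t0) * (c + e)) (at_right t0)" if p: "p \<in> P" for p
  proof (cases "f p t0 = G0")
    case True
    have "eventually (\<lambda>y. (f p y - f p t0)/(y - t0) < d p + e) (at_right t0)"
      using order_tendstoD(2)[OF deriv[OF p]] e by auto
    moreover have "eventually (\<lambda>y. t0 < y) (at_right t0)" by (rule eventually_at_right_less)
    ultimately show ?thesis
    proof eventually_elim
      case (elim y)
      have "d p \<le> c" using bnd[OF p] True G0_def by auto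
      with elim have "(f p y - f p t0)/(y - t0) < c + e" by linarith
      with elim(2) have "f p y - f p t0 < (c + e) * (y - t0)"
        by (simp add: divide_less_eq)
      thus ?case using True by (simp add: algebra_simps)
    qed
  next
    case False
    have "f p t0 \<le> G0" unfolding G0_def using fin p by (intro Max_ge) auto
    with False have lt: "f p t0 < G0" by simp
    have "((\<lambda>y. f p y - (y - t0) * (c + e)) \<longlongrightarrow> f p t0 - (t0 - t0) * (c+e)) (at_right t0)"
      by (intro tendsto_intros cont[OF p])
    hence "eventually (\<lambda>y. f p y - (y - t0) * (c + e) < G0) (at_right t0)"
      using order_tendstoD(2) lt by auto
    thus ?thesis by eventually_elim simp
  qed
  have "eventually (\<lambda>y. \<forall>p\<in>P. f p y \<le> G0 + (y - t0) * (c + e)) (at_right t0)"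
    using each fin by (simp add: eventually_ball_finite)
  moreover have "eventually (\<lambda>y. t0 < y) (at_right t0)" by (rule eventually_at_right_less)
  ultimately have "eventually (\<lambda>y. (Max ((\<lambda>q. f q y) ` P) - G0)/(y - t0) \<le> c + e) (at_right t0)"
  proof eventually_elim
    case (elim y)
    have "Max ((\<lambda>q. f q y) ` P) \<le> G0 + (y - t0) * (c + e)"
      using elim(1) fin ne by (subst Max_le_iff) auto
    thus ?case using elim(2) by (simp add: divide_le_eq algebra_simps)
  qed
  hence "eventually (\<lambda>h. (Max ((\<lambda>q. f q (t0+h)) ` P) - G0)/h \<le> c + e) (at_right 0)"
    by (subst (asm) eventually_at_right_to_0) (simp add: add.commute)
  hence "Limsup (at_right 0) (\<lambda>h. ereal ((Max ((\<lambda>q. f q (t0+h)) ` P) - G0)/h)) \<le> ereal (c + e)"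
    by (intro Limsup_bounded) (auto elim: eventually_mono)
  thus "Limsup (at_right 0) (\<lambda>h. ereal ((Max ((\<lambda>q. f q (t0+h)) ` P) - Max ((\<lambda>q. f q t0) ` P))/h)) \<le> ereal c + ereal e"
    by (simp add: G0_def)
qed

lemma diam_abs: "diam A x = Max ((\<lambda>(i,j). \<bar>x i - x j\<bar>) ` (A\<times>A))"
proof -
  have "{\<bar>x i - x j\<bar> | i j. i \<in> A \<and> j \<in> A} = (\<lambda>(i,j). \<bar>x i - x j\<bar>) ` (A\<times>A)" by auto
  thus ?thesis by (simp add: diam_def)
qed

lemma diam_alt: assumes "finite A" "A \<noteq> {}"
  shows "diam A x = Max ((\<lambda>(i,j). x i - x j) ` (A\<times>A))"
proof -
  have fin: "finite (A\<times>A)" "A\<times>A \<noteq> {}" using assms by auto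
  show ?thesis unfolding diam_abs
  proof (rule antisym)
    have "\<bar>x i - x j\<bar> \<le> Max ((\<lambda>(i,j). x i - x j) ` (A\<times>A))" if "i \<in> A" "j \<in> A" for i j
    proof -
      have a: "x i - x j \<le> Max ((\<lambda>(i,j). x i - x j) ` (A\<times>A))"
        using that fin by (intro Max_ge) auto
      have b: "x j - x i \<le> Max ((\<lambda>(i,j). x i - x j) ` (A\<times>A))"
        using that fin by (intro Max_ge) auto
      show ?thesis using a b by (simp add: abs_if)
    qed
    thus "Max ((\<lambda>(i,j). \<bar>x i - x j\<bar>) ` (A\<times>A)) \<le> Max ((\<lambda>(i,j). x i - x j) ` (A\<times>A))"
      by (subst Max_le_iff) (use fin in auto)
    have "x i - x j \<le> Max ((\<lambda>(i,j). \<bar>x i - x j\<bar>) ` (A\<times>A))" if "i \<in> A" "j \<in> A" for i j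
    proof -
      have a: "\<bar>x i - x j\<bar> \<le> Max ((\<lambda>(i,j). \<bar>x i - x j\<bar>) ` (A\<times>A))"
        using that fin by (intro Max_ge) auto
      show ?thesis using a by linarith
    qed
    thus "Max ((\<lambda>(i,j). x i - x j) ` (A\<times>A)) \<le> Max ((\<lambda>(i,j). \<bar>x i - x j\<bar>) ` (A\<times>A))"
      by (subst Max_le_iff) (use fin in auto)
  qed
qed

lemma key:
  fixes x \<nu> :: "nat \<Rightarrow> real" and \<kappa> \<gamma> D :: real and N M m :: nat
  assumes "\<kappa> \<ge> 0" "\<gamma> \<le> 1" "A \<subseteq> {1..N}" "N > 0"
    and "real (card A) / real N \<ge> \<gamma>"
    and MA: "M \<in> A" and mA: "m \<in> A" and D: "x M - x m = D"
    and btw: "\<And>j. j \<in> A \<Longrightarrow> x m \<le> x j \<and> x j \<le> x M"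
    and Dpi: "D < 2 * pi" and nu: "\<nu> M - \<nu> m \<le> W"
  shows "kuramoto_rhs N \<nu> \<kappa> x M - kuramoto_rhs N \<nu> \<kappa> x m
     \<le> W - 2 * \<kappa> * sin (D / 2) * (\<gamma> * cos (D / 2) - (1 - \<gamma>))"
proof -
  define c where "c = (x M + x m) / 2"
  define s where "s = sin (D/2)"
  define C where "C = cos (D/2)"
  have D0: "0 \<le> D" using btw[OF MA] D by simp
  have s0: "0 \<le> s" unfolding s_def using D0 Dpi by (intro sin_ge_zero) auto
  have C1: "C \<ge> -1" unfolding C_def by simp
  define tm where "tm j = sin (x j - x M) - sin (x j - x m)" for j
  have tm_eq: "tm j = - 2 * s * cos (x j - c)" for j
  proof -
    have "tm j = 2 * sin ((x j - x M - (x j - x m)) / 2) * cos ((x j - x M + (x j - x m)) / 2)"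
      unfolding tm_def by (rule sin_diff_sin)
    also have "(x j - x M - (x j - x m)) / 2 = - (D/2)" using D by simp
    also have "(x j - x M + (x j - x m)) / 2 = x j - c" unfolding c_def by (simp add: field_simps)
    finally show ?thesis unfolding s_def by simp
  qed
  have tmA: "tm j \<le> - 2 * s * C" if j: "j \<in> A" for j
  proof -
    have "-(D/2) \<le> x j - c \<and> x j - c \<le> D/2" using btw[OF j] D unfolding c_def by (auto simp: field_simps)
    hence "\<bar>x j - c\<bar> \<le> D/2" by linarith
    hence "cos (D/2) \<le> cos \<bar>x j - c\<bar>" using Dpi D0
      by (subst cos_mono_le_eq) auto
    hence "C \<le> cos (x j - c)" unfolding C_def by simp
    thus ?thesis unfolding tm_eq using s0 by (simp add: mult_left_mono)
  qed
  have tmO: "tm j \<le> 2 * s" for j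
  proof -
    have "-1 \<le> cos (x j - c)" by simp
    hence "s * (-1) \<le> s * cos (x j - c)" using s0 by (rule mult_left_mono)
    thus ?thesis unfolding tm_eq by linarith
  qed
  have finN: "finite {1..N}" by simp
  have finA: "finite A" using assms(3) finite_subset by blast
  have cardA: "card A \<le> N" using card_mono[OF finN assms(3)] by simp
  have "(\<Sum>j\<in>{1..N}. tm j) = (\<Sum>j\<in>A. tm j) + (\<Sum>j\<in>{1..N}-A. tm j)"
    using sum.subset_diff[OF assms(3) finN, of tm] by simp
  also have "(\<Sum>j\<in>A. tm j) \<le> real (card A) * (- 2 * s * C)"
    using tmA by (rule sum_bounded_above)
  also have "(\<Sum>j\<in>{1..N}-A. tm j) \<le> real (card ({1..N}-A)) * (2 * s)"
    using tmO by (rule sum_bounded_above)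
  also have "card ({1..N}-A) = N - card A" using card_Diff_subset[OF finA assms(3)] by simp
  finally have sumle: "(\<Sum>j\<in>{1..N}. tm j) \<le> real (card A) * (- 2 * s * C) + (real N - real (card A)) * (2 * s)"
    using cardA by (simp add: of_nat_diff)
  define a where "a = real (card A) / real N"
  have ag: "\<gamma> \<le> a" using assms(5) a_def by simp
  have cardA_eq: "real (card A) = a * real N" using assms(4) a_def by simp
  have rhs: "kuramoto_rhs N \<nu> \<kappa> x M - kuramoto_rhs N \<nu> \<kappa> x m
       = \<nu> M - \<nu> m + \<kappa> / real N * (\<Sum>j\<in>{1..N}. tm j)"
    unfolding kuramoto_rhs_def tm_def by (simp add: sum_subtractf algebra_simps)
  have "\<kappa> / real N * (\<Sum>j\<in>{1..N}. tm j) \<le> \<kappa> / real N * (real (card A) * (- 2 * s * C) + (real N - real (card A)) * (2 * s))"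
    using sumle assms(1) by (intro mult_left_mono) auto
  also have "\<dots> = - 2 * \<kappa> * s * (a * C - (1 - a))"
    unfolding cardA_eq using assms(4) by (simp add: field_simps)
  also have "\<dots> \<le> - 2 * \<kappa> * s * (\<gamma> * C - (1 - \<gamma>))"
  proof -
    have "0 \<le> \<kappa> * s * ((a - \<gamma>) * (C + 1))"
      using assms(1) s0 ag C1 by (intro mult_nonneg_nonneg) auto
    thus ?thesis by (simp add: algebra_simps)
  qed
  finally show ?thesis using rhs nu unfolding s_def C_def by linarith
qed

theorem lemma4p1:
  fixes N :: nat and \<nu> :: "nat \<Rightarrow> real" and \<kappa> \<gamma> t0 T :: real
    and \<Theta> :: "real \<Rightarrow> nat \<Rightarrow> real" and A B :: "nat set"
  assumes "N \<ge> 2" and "\<kappa> \<ge> 0" and "1/2 < \<gamma>" and "\<gamma> \<le> 1"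
    and "A \<subseteq> B" and "B \<subseteq> {1..N}"
    and "real (card A) / real N \<ge> \<gamma>"
    and "T > 0"
    and sol: "\<And>i t. i \<in> {1..N} \<Longrightarrow> t \<in> {t0..<t0+T} \<Longrightarrow>
           ((\<lambda>s. \<Theta> s i) has_real_derivative kuramoto_rhs N \<nu> \<kappa> (\<Theta> t) i) (at t within {t0..<t0+T})"
    and "diam A (\<Theta> t0) < 2 * pi"
  shows "upper_dini (\<lambda>t. diam A (\<Theta> t)) t0
    \<le> ereal (diam B \<nu> - 2 * \<kappa> * sin (diam A (\<Theta> t0) / 2)
              * (\<gamma> * cos (diam A (\<Theta> t0) / 2) - (1 - \<gamma>)))"
proof -
  have AN: "A \<subseteq> {1..N}" using assms(5,6) by auto
  have finA: "finite A" using AN finite_subset by blast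
  have finB: "finite B" using assms(6) finite_subset by blast
  have Ane: "A \<noteq> {}"
  proof
    assume "A = {}" thus False using assms(3,7) by simp
  qed
  define f where "f = (\<lambda>(q::nat\<times>nat) t. \<Theta> t (fst q) - \<Theta> t (snd q))"
  define d where "d = (\<lambda>q::nat\<times>nat. kuramoto_rhs N \<nu> \<kappa> (\<Theta> t0) (fst q) - kuramoto_rhs N \<nu> \<kappa> (\<Theta> t0) (snd q))"
  define c where "c = diam B \<nu> - 2 * \<kappa> * sin (diam A (\<Theta> t0) / 2)
              * (\<gamma> * cos (diam A (\<Theta> t0) / 2) - (1 - \<gamma>))"
  have dm: "diam A (\<Theta> t) = Max ((\<lambda>q. f q t) ` (A\<times>A))" for t
    unfolding diam_alt[OF finA Ane] f_def by (simp add: case_prod_beta)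
  have atr: "at t0 within {t0..<t0+T} = at_right t0" using assms(8) by (rule at_Ico)
  have t0S: "t0 \<in> {t0..<t0+T}" using assms(8) by simp
  have D: "(f p has_real_derivative d p) (at_right t0)" if p: "p \<in> A\<times>A" for p
  proof -
    have i: "fst p \<in> {1..N}" and j: "snd p \<in> {1..N}" using p AN by auto
    have "((\<lambda>t. \<Theta> t (fst p) - \<Theta> t (snd p)) has_real_derivative d p) (at t0 within {t0..<t0+T})"
      unfolding d_def by (intro DERIV_diff sol i j t0S)
    thus ?thesis unfolding atr f_def by (simp add: case_prod_beta)
  qed
  have "Limsup (at_right 0) (\<lambda>h. ereal ((Max ((\<lambda>q. f q (t0+h)) ` (A\<times>A)) - Max ((\<lambda>q. f q t0) ` (A\<times>A)))/h)) \<le> ereal c"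
  proof (rule dini_max)
    show "finite (A\<times>A)" "A\<times>A \<noteq> {}" using finA Ane by auto
  next
    fix p assume p: "p \<in> A\<times>A"
    show "((\<lambda>y. (f p y - f p t0)/(y - t0)) \<longlongrightarrow> d p) (at_right t0)"
      using D[OF p] by (simp add: has_field_derivative_iff)
    show "(f p \<longlongrightarrow> f p t0) (at_right t0)"
      using DERIV_continuous[OF D[OF p]] by (simp add: continuous_within)
  next
    fix p assume p: "p \<in> A\<times>A" and act: "f p t0 = Max ((\<lambda>q. f q t0) ` (A\<times>A))"
    obtain M m where pe: "p = (M, m)" by (cases p)
    have MA: "M \<in> A" and mA: "m \<in> A" using p pe by auto
    define x where "x = \<Theta> t0"
    have Dq: "x M - x m = diam A (\<Theta> t0)" using act dm[of t0] pe unfolding f_def x_def by simp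
    have fge: "f q t0 \<le> diam A (\<Theta> t0)" if "q \<in> A\<times>A" for q
      unfolding dm using that finA by (intro Max_ge) auto
    have btw: "x m \<le> x j \<and> x j \<le> x M" if j: "j \<in> A" for j
    proof -
      have "f (M, j) t0 \<le> diam A (\<Theta> t0)" "f (j, m) t0 \<le> diam A (\<Theta> t0)"
        using fge MA mA j by auto
      thus ?thesis using Dq unfolding f_def x_def by auto
    qed
    have nu: "\<nu> M - \<nu> m \<le> diam B \<nu>"
    proof -
      have "\<bar>\<nu> M - \<nu> m\<bar> \<le> diam B \<nu>"
        unfolding diam_abs using MA mA assms(5) finB by (intro Max_ge) auto
      thus ?thesis by linarith
    qed
    have "kuramoto_rhs N \<nu> \<kappa> x M - kuramoto_rhs N \<nu> \<kappa> x m \<le> c"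
      unfolding c_def
      by (rule key[OF assms(2) assms(4) AN _ assms(7) MA mA Dq btw assms(10) nu])
         (use assms(1) in auto)
    thus "d p \<le> c" unfolding d_def pe x_def by simp
  qed
  thus ?thesis unfolding upper_dini_def dm[symmetric] c_def .
qed

end
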